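(* (a) $\Delta'\in\mathbb{Q}[x_0,\ldots,x_4]$ is a symmetric polynomial, homogeneous of degree eight, and absolutely irreducible. (b) One has $\Delta'(0,x_1,\ldots,x_4)=D^2$ for a symmetric, homogeneous quartic form $D\in\mathbb{Q}[x_1,\ldots,x_4]$.
   Context: $$\Delta'(x_0,\ldots,x_4):=\prod_{i_1,\ldots,i_4\in\{0,1\}}\big(\sqrt{x_0}+(-1)^{i_1}\sqrt{x_1}+(-1)^{i_2}\sqrt{x_2}+(-1)^{i_3}\sqrt{x_3}+(-1)^{i_4}\sqrt{x_4}\big),$$ a priori an element of $\mathbb{Q}[\sqrt{x_0},\ldots,\sqrt{x_4}]$. *)

theory Defs
  imports Complex_Main "HOL-Library.Poly_Mapping" "HOL-Computational_Algebra.Factorial_Ring"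
    "HOL-Combinatorics.Permutations"
begin

text \<open>Multivariate polynomials in the variables x_0, x_1, ... (indexed by nat) with
  coefficients in 'a: finitely supported maps from monomials (exponent vectors) to 'a.\<close>
type_synonym 'a mpoly = "(nat \<Rightarrow>\<^sub>0 nat) \<Rightarrow>\<^sub>0 'a"

definition Var :: "nat \<Rightarrow> 'a::comm_ring_1 mpoly" where
  "Var i = Poly_Mapping.single (Poly_Mapping.single i 1) 1"

definition Const :: "'a::comm_ring_1 \<Rightarrow> 'a mpoly" where
  "Const c = Poly_Mapping.single 0 c"

definition subst :: "(nat \<Rightarrow> 'a::comm_ring_1 mpoly) \<Rightarrow> 'a mpoly \<Rightarrow> 'a mpoly" where
  "subst s p = (\<Sum>m\<in>Poly_Mapping.keys p.
      Const (Poly_Mapping.lookup p m) * (\<Prod>i\<in>Poly_Mapping.keys m. s i ^ Poly_Mapping.lookup m i))"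

definition vars :: "'a::zero mpoly \<Rightarrow> nat set" where
  "vars p = (\<Union>m\<in>Poly_Mapping.keys p. Poly_Mapping.keys m)"

definition total_deg :: "(nat \<Rightarrow>\<^sub>0 nat) \<Rightarrow> nat" where
  "total_deg m = (\<Sum>i\<in>Poly_Mapping.keys m. Poly_Mapping.lookup m i)"

definition homogeneous :: "nat \<Rightarrow> 'a::zero mpoly \<Rightarrow> bool" where
  "homogeneous d p \<longleftrightarrow> (\<forall>m\<in>Poly_Mapping.keys p. total_deg m = d)"

definition symmetric_in :: "nat set \<Rightarrow> 'a::comm_ring_1 mpoly \<Rightarrow> bool" where
  "symmetric_in V p \<longleftrightarrow> (\<forall>\<pi>. \<pi> permutes V \<longrightarrow> subst (\<lambda>i. Var (\<pi> i)) p = p)"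

text \<open>The product over all sign choices, as a polynomial in y_i = sqrt x_i.\<close>
definition Delta_sqrt :: "rat mpoly" where
  "Delta_sqrt = (\<Prod>S\<in>Pow {1..4::nat}.
      Var 0 + (\<Sum>i\<in>{1..4}. (if i \<in> S then - Var i else Var i)))"

end

theory Submission
  imports Defs
begin


definition mon :: "(nat \<Rightarrow> 'a::comm_ring_1 mpoly) \<Rightarrow> (nat \<Rightarrow>\<^sub>0 nat) \<Rightarrow> 'a mpoly" where
  "mon s m = (\<Prod>i\<in>Poly_Mapping.keys m. s i ^ Poly_Mapping.lookup m i)"

lemma mon_superset:
  assumes "finite K" "Poly_Mapping.keys m \<subseteq> K"
  shows "mon s m = (\<Prod>i\<in>K. s i ^ Poly_Mapping.lookup m i)"
  unfolding mon_def
  by (rule prod.mono_neutral_left) (use assms in \<open>auto simp: in_keys_iff\<close>)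

lemma mon_zero [simp]: "mon s 0 = 1"
  by (simp add: mon_def)

lemma mon_add: "mon s (m + n) = mon s m * mon s n"
proof -
  let ?K = "Poly_Mapping.keys m \<union> Poly_Mapping.keys n"
  have "mon s (m + n) = (\<Prod>i\<in>?K. s i ^ Poly_Mapping.lookup (m+n) i)"
    by (rule mon_superset) (use keys_add[of m n] in auto)
  also have "\<dots> = (\<Prod>i\<in>?K. s i ^ Poly_Mapping.lookup m i * s i ^ Poly_Mapping.lookup n i)"
    by (simp add: lookup_add power_add)
  also have "\<dots> = mon s m * mon s n"
    by (simp add: prod.distrib mon_superset[of ?K])
  finally show ?thesis .
qed

lemma Const_zero [simp]: "Const 0 = 0" by (simp add: Const_def)
lemma Const_one [simp]: "Const 1 = 1" by (simp add: Const_def)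
lemma Const_add: "Const (a + b) = Const a + Const b" by (simp add: Const_def single_add)
lemma Const_mult: "Const (a * b) = Const a * Const b" by (simp add: Const_def mult_single)
lemma Const_uminus: "Const (- a) = - Const a" by (simp add: Const_def single_uminus)
lemma Const_diff: "Const (a - b) = Const a - Const b" by (simp add: Const_def single_diff)

lemma subst_superset:
  assumes "finite K" "Poly_Mapping.keys p \<subseteq> K"
  shows "subst s p = (\<Sum>m\<in>K. Const (Poly_Mapping.lookup p m) * mon s m)"
  unfolding subst_def mon_def[symmetric]
  by (rule sum.mono_neutral_left) (use assms in \<open>auto simp: in_keys_iff\<close>)

lemma subst_zero [simp]: "subst s 0 = 0" by (simp add: subst_def)

lemma subst_add: "subst s (p + q) = subst s p + subst s q"
proof -
  let ?K = "Poly_Mapping.keys p \<union> Poly_Mapping.keys q"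
  have "subst s (p + q) = (\<Sum>m\<in>?K. Const (Poly_Mapping.lookup (p+q) m) * mon s m)"
    by (rule subst_superset) (use keys_add[of p q] in auto)
  also have "\<dots> = (\<Sum>m\<in>?K. Const (Poly_Mapping.lookup p m) * mon s m + Const (Poly_Mapping.lookup q m) * mon s m)"
    by (simp add: lookup_add Const_add distrib_right)
  also have "\<dots> = subst s p + subst s q"
    by (simp add: sum.distrib subst_superset[of ?K])
  finally show ?thesis .
qed

lemma subst_single: "subst s (Poly_Mapping.single m c) = Const c * mon s m"
proof (cases "c = 0")
  case True thus ?thesis by simp
next
  case False thus ?thesis by (simp add: subst_def mon_def)
qed

lemma subst_sum: "subst s (\<Sum>x\<in>A. f x) = (\<Sum>x\<in>A. subst s (f x))"
  by (induction A rule: infinite_finite_induct) (auto simp: subst_add)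

lemma subst_uminus: "subst s (- p) = - subst s p"
proof -
  have "subst s (- p) + subst s p = 0" by (simp flip: subst_add)
  thus ?thesis by (simp add: eq_neg_iff_add_eq_0)
qed

lemma subst_diff: "subst s (p - q) = subst s p - subst s q"
  by (simp only: diff_conv_add_uminus subst_add subst_uminus)

lemma mpoly_expand: "p = (\<Sum>m\<in>Poly_Mapping.keys p. Poly_Mapping.single m (Poly_Mapping.lookup p m))"
proof (rule poly_mapping_eqI)
  fix k
  show "Poly_Mapping.lookup p k = Poly_Mapping.lookup (\<Sum>m\<in>Poly_Mapping.keys p. Poly_Mapping.single m (Poly_Mapping.lookup p m)) k"
    by (simp add: lookup_sum lookup_single when_def in_keys_iff)
qed

lemma subst_eq: "subst s p = (\<Sum>m\<in>Poly_Mapping.keys p. Const (Poly_Mapping.lookup p m) * mon s m)"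
  by (rule subst_superset) auto

lemma mult_expand: "p * q = (\<Sum>m\<in>Poly_Mapping.keys p. \<Sum>n\<in>Poly_Mapping.keys q.
     Poly_Mapping.single (m + n) (Poly_Mapping.lookup p m * Poly_Mapping.lookup q n))" (is "_ = ?rhs")
proof -
  have "p * q = (\<Sum>m\<in>Poly_Mapping.keys p. Poly_Mapping.single m (Poly_Mapping.lookup p m)) *
                (\<Sum>n\<in>Poly_Mapping.keys q. Poly_Mapping.single n (Poly_Mapping.lookup q n))"
    by (simp flip: mpoly_expand)
  also have "\<dots> = ?rhs"
    by (simp add: sum_product mult_single)
  finally show ?thesis .
qed

lemma subst_mult: "subst s (p * q) = subst s p * subst s q"
proof -
  have "subst s (p * q) = (\<Sum>m\<in>Poly_Mapping.keys p. \<Sum>n\<in>Poly_Mapping.keys q.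
     Const (Poly_Mapping.lookup p m) * mon s m * (Const (Poly_Mapping.lookup q n) * mon s n))"
    by (subst mult_expand) (simp add: subst_sum subst_single mon_add Const_mult ac_simps)
  also have "\<dots> = subst s p * subst s q"
    by (simp add: subst_eq sum_product)
  finally show ?thesis .
qed

lemma subst_one [simp]: "subst s 1 = 1"
  by (metis single_one subst_single mon_zero Const_one mult_1)

lemma subst_Const [simp]: "subst s (Const c) = Const c"
  by (simp add: Const_def subst_single)

lemma keys_single_one: "Poly_Mapping.keys (Poly_Mapping.single (i::nat) (1::nat)) = {i}"
  by simp

lemma subst_Var [simp]: "subst s (Var i) = s i"
  by (simp add: Var_def subst_single mon_def Const_def[symmetric])

lemma subst_prod: "subst s (\<Prod>x\<in>A. f x) = (\<Prod>x\<in>A. subst s (f x))"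
  by (induction A rule: infinite_finite_induct) (auto simp: subst_mult)

lemma subst_power: "subst s (p ^ n) = subst s p ^ n"
  by (induction n) (auto simp: subst_mult)

lemma subst_mon: "subst s (mon t m) = mon (\<lambda>i. subst s (t i)) m"
  by (simp add: mon_def subst_prod subst_power)

lemma subst_subst: "subst s (subst t p) = subst (\<lambda>i. subst s (t i)) p"
  by (simp add: subst_eq[of t] subst_sum subst_mult subst_mon subst_eq[of "\<lambda>i. subst s (t i)"])

lemma Var_power: "Var i ^ k = Poly_Mapping.single (Poly_Mapping.single i k) 1"
  by (induction k) (auto simp: Var_def mult_single single_add[symmetric] add.commute)

lemma prod_single: "finite A \<Longrightarrow> (\<Prod>x\<in>A. Poly_Mapping.single (f x) (1::'a::comm_ring_1)) = Poly_Mapping.single (\<Sum>x\<in>A. f x) 1"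
  by (induction A rule: finite_induct) (auto simp: mult_single)

lemma mon_Var: "mon Var m = Poly_Mapping.single m 1"
proof -
  have "mon Var m = (\<Prod>i\<in>Poly_Mapping.keys m. Poly_Mapping.single (Poly_Mapping.single i (Poly_Mapping.lookup m i)) 1)"
    by (simp add: mon_def Var_power)
  also have "\<dots> = Poly_Mapping.single (\<Sum>i\<in>Poly_Mapping.keys m. Poly_Mapping.single i (Poly_Mapping.lookup m i)) 1"
    by (simp add: prod_single)
  also have "\<dots> = Poly_Mapping.single m 1"
    by (simp flip: mpoly_expand)
  finally show ?thesis .
qed

lemma Const_mult_single: "Const c * Poly_Mapping.single m d = Poly_Mapping.single m (c * d)"
  by (simp add: Const_def mult_single)

lemma subst_Var_id [simp]: "subst Var p = p"
  by (simp add: subst_eq mon_Var Const_mult_single flip: mpoly_expand)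



definition wt :: "(nat \<Rightarrow> 'a::comm_ring_1) \<Rightarrow> (nat \<Rightarrow>\<^sub>0 nat) \<Rightarrow> 'a" where
  "wt d m = (\<Prod>i\<in>Poly_Mapping.keys m. d i ^ Poly_Mapping.lookup m i)"

lemma Const_power: "Const (c ^ n) = Const c ^ n"
  by (induction n) (auto simp: Const_mult)

lemma Const_prod: "Const (\<Prod>x\<in>A. f x) = (\<Prod>x\<in>A. Const (f x))"
  by (induction A rule: infinite_finite_induct) (auto simp: Const_mult)

lemma mon_scale: "mon (\<lambda>i. Const (d i) * Var i) m = Poly_Mapping.single m (wt d m)"
proof -
  have "mon (\<lambda>i. Const (d i) * Var i) m = Const (wt d m) * mon Var m"
    by (simp add: mon_def wt_def power_mult_distrib prod.distrib Const_prod Const_power)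
  thus ?thesis by (simp add: mon_Var Const_mult_single)
qed

lemma lookup_subst_scale:
  "Poly_Mapping.lookup (subst (\<lambda>i. Const (d i) * Var i) p) m = wt d m * Poly_Mapping.lookup p m"
proof -
  have "subst (\<lambda>i. Const (d i) * Var i) p =
     (\<Sum>n\<in>Poly_Mapping.keys p. Poly_Mapping.single n (Poly_Mapping.lookup p n * wt d n))"
    by (simp add: subst_eq mon_scale Const_mult_single)
  thus ?thesis
    by (simp add: lookup_sum lookup_single when_def in_keys_iff)
qed

definition flip :: "nat \<Rightarrow> nat \<Rightarrow> 'a::comm_ring_1 mpoly" where
  "flip j i = (if i = j then - Var i else Var i)"

lemma flip_scale: "flip j = (\<lambda>i. Const (if i = j then -1 else 1) * Var i)"
  by (auto simp: flip_def fun_eq_iff Const_uminus)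

lemma wt_flip: "wt (\<lambda>i. if i = j then -1 else 1) m = (-1) ^ Poly_Mapping.lookup m j"
proof (cases "j \<in> Poly_Mapping.keys m")
  case True
  have "wt (\<lambda>i. if i = j then -1 else 1) m =
     (\<Prod>i\<in>Poly_Mapping.keys m. if i = j then (-1) ^ Poly_Mapping.lookup m j else 1)"
    unfolding wt_def by (rule prod.cong) auto
  also have "\<dots> = (-1) ^ Poly_Mapping.lookup m j"
    using True by (simp add: prod.delta)
  finally show ?thesis .
next
  case False
  hence "Poly_Mapping.lookup m j = 0" by (simp add: in_keys_iff)
  moreover have "wt (\<lambda>i. if i = j then -1 else 1) m = 1"
    unfolding wt_def by (rule prod.neutral) (use False in auto)
  ultimately show ?thesis by simp
qed

lemma lookup_subst_flip:
  "Poly_Mapping.lookup (subst (flip j) p) m = (-1) ^ Poly_Mapping.lookup m j * Poly_Mapping.lookup p m"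
  by (simp add: flip_scale lookup_subst_scale wt_flip)

lemma flip_even:
  fixes p :: "'a::field_char_0 mpoly"
  assumes "subst (flip j) p = p" "m \<in> Poly_Mapping.keys p"
  shows "even (Poly_Mapping.lookup m j)"
proof (rule ccontr)
  assume "odd (Poly_Mapping.lookup m j)"
  hence "Poly_Mapping.lookup p m = - Poly_Mapping.lookup p m"
    using lookup_subst_flip[of j p m] assms(1) by simp
  hence "Poly_Mapping.lookup p m = 0" by simp
  with assms(2) show False by (simp add: in_keys_iff)
qed

definition sq :: "nat \<Rightarrow> 'a::comm_ring_1 mpoly" where
  "sq i = Var i ^ 2"

lemma mon_sq: "mon sq m = Poly_Mapping.single (m + m) 1"
proof -
  have "mon sq m = mon Var m ^ 2"
    by (simp add: mon_def sq_def prod_power_distrib flip: power_mult power_mult_distrib)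
       (simp add: power_mult[symmetric] mult.commute)
  thus ?thesis by (simp add: mon_Var power2_eq_square mult_single)
qed

lemma subst_sq_eq: "subst sq p = (\<Sum>n\<in>Poly_Mapping.keys p. Poly_Mapping.single (n + n) (Poly_Mapping.lookup p n))"
  by (simp add: subst_eq mon_sq Const_mult_single)

lemma double_inj: "(m + m = n + (n::nat \<Rightarrow>\<^sub>0 nat)) \<longleftrightarrow> m = n"
proof
  assume "m + m = n + n"
  hence "\<And>i. Poly_Mapping.lookup (m+m) i = Poly_Mapping.lookup (n+n) i" by simp
  hence "\<And>i. Poly_Mapping.lookup m i + Poly_Mapping.lookup m i = Poly_Mapping.lookup n i + Poly_Mapping.lookup n i" by (simp add: lookup_add)
  hence "\<And>i. Poly_Mapping.lookup m i = Poly_Mapping.lookup n i" by (metis add_self_div_2)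
  thus "m = n" by (rule poly_mapping_eqI)
qed simp

lemma lookup_subst_sq:
  "Poly_Mapping.lookup (subst sq p) k = (\<Sum>n\<in>Poly_Mapping.keys p. (Poly_Mapping.lookup p n when k = n + n))"
  by (simp add: subst_sq_eq lookup_sum lookup_single when_def eq_commute)

lemma lookup_subst_sq_double [simp]:
  "Poly_Mapping.lookup (subst sq p) (n + n) = Poly_Mapping.lookup p n"
proof -
  have "(\<Sum>m\<in>Poly_Mapping.keys p. (Poly_Mapping.lookup p m when n + n = m + m)) =
        (\<Sum>m\<in>Poly_Mapping.keys p. (if m = n then Poly_Mapping.lookup p m else 0))"
    by (rule sum.cong) (auto simp: double_inj when_def)
  thus ?thesis by (simp add: lookup_subst_sq in_keys_iff)
qed

lemma keys_subst_sq: "Poly_Mapping.keys (subst sq p) = (\<lambda>n. n + n) ` Poly_Mapping.keys p"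
proof (intro equalityI subsetI)
  fix k assume "k \<in> Poly_Mapping.keys (subst sq p)"
  hence "(\<Sum>n\<in>Poly_Mapping.keys p. (Poly_Mapping.lookup p n when k = n + n)) \<noteq> 0"
    by (simp add: lookup_subst_sq in_keys_iff)
  then obtain n where "n \<in> Poly_Mapping.keys p" "(Poly_Mapping.lookup p n when k = n + n) \<noteq> 0"
    using sum.not_neutral_contains_not_neutral by blast
  thus "k \<in> (\<lambda>n. n + n) ` Poly_Mapping.keys p" by (auto simp: when_def split: if_splits)
next
  fix k assume "k \<in> (\<lambda>n. n + n) ` Poly_Mapping.keys p"
  thus "k \<in> Poly_Mapping.keys (subst sq p)" by (auto simp: in_keys_iff)
qed

lemma subst_sq_inj:
  assumes "subst sq p = subst sq q" shows "p = q"
proof (rule poly_mapping_eqI)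
  fix n
  have "Poly_Mapping.lookup (subst sq p) (n + n) = Poly_Mapping.lookup (subst sq q) (n + n)"
    using assms by simp
  thus "Poly_Mapping.lookup p n = Poly_Mapping.lookup q n" by simp
qed

definition half :: "(nat \<Rightarrow>\<^sub>0 nat) \<Rightarrow> (nat \<Rightarrow>\<^sub>0 nat)" where
  "half m = Poly_Mapping.map (\<lambda>k. k div 2) m"

lemma lookup_half: "Poly_Mapping.lookup (half m) i = Poly_Mapping.lookup m i div 2"
  by (simp add: half_def map.rep_eq when_def)

lemma half_double:
  assumes "\<And>i. even (Poly_Mapping.lookup m i)"
  shows "half m + half m = m"
proof (rule poly_mapping_eqI)
  fix i show "Poly_Mapping.lookup (half m + half m) i = Poly_Mapping.lookup m i"
    using assms[of i] by (auto simp: lookup_add lookup_half elim!: evenE)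
qed

lemma even_root:
  assumes "\<And>m i. m \<in> Poly_Mapping.keys p \<Longrightarrow> even (Poly_Mapping.lookup m i)"
  shows "subst sq (\<Sum>m\<in>Poly_Mapping.keys p. Poly_Mapping.single (half m) (Poly_Mapping.lookup p m)) = p"
proof -
  have "subst sq (\<Sum>m\<in>Poly_Mapping.keys p. Poly_Mapping.single (half m) (Poly_Mapping.lookup p m)) =
    (\<Sum>m\<in>Poly_Mapping.keys p. Poly_Mapping.single m (Poly_Mapping.lookup p m))"
    by (rule trans[OF subst_sum sum.cong])
       (auto simp: subst_single mon_sq Const_mult_single half_double assms)
  thus ?thesis by (simp flip: mpoly_expand)
qed

lemma even_root_ex:
  fixes p :: "'a::field_char_0 mpoly"
  assumes "vars p \<subseteq> V" "\<And>j. j \<in> V \<Longrightarrow> subst (flip j) p = p"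
  shows "\<exists>q. subst sq q = p"
proof -
  have "even (Poly_Mapping.lookup m i)" if "m \<in> Poly_Mapping.keys p" for m i
  proof (cases "i \<in> V")
    case True thus ?thesis using flip_even[OF assms(2) that] by auto
  next
    case False
    hence "i \<notin> Poly_Mapping.keys m" using assms(1) that by (auto simp: vars_def)
    thus ?thesis by (simp add: in_keys_iff)
  qed
  thus ?thesis using even_root by blast
qed

lemma keys_double: "Poly_Mapping.keys (n + n :: nat \<Rightarrow>\<^sub>0 nat) = Poly_Mapping.keys n"
  by (auto simp: in_keys_iff lookup_add)

lemma vars_subst_sq: "vars (subst sq q) = vars q"
  by (auto simp: vars_def keys_subst_sq keys_double)

lemma total_deg_add: "total_deg (m + n) = total_deg m + total_deg n"
proof -
  let ?K = "Poly_Mapping.keys m \<union> Poly_Mapping.keys n"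
  have s: "total_deg x = (\<Sum>i\<in>?K. Poly_Mapping.lookup x i)" if "Poly_Mapping.keys x \<subseteq> ?K" for x
    unfolding total_deg_def by (rule sum.mono_neutral_left) (use that in \<open>auto simp: in_keys_iff\<close>)
  have "Poly_Mapping.keys (m + n) \<subseteq> ?K" using keys_add[of m n] by auto
  thus ?thesis by (simp add: s lookup_add sum.distrib)
qed

lemma homogeneous_subst_sq:
  assumes "homogeneous (2 * d) (subst sq q)" shows "homogeneous d q"
  using assms by (auto simp: homogeneous_def keys_subst_sq total_deg_add)



definition LF :: "nat set \<Rightarrow> nat \<Rightarrow> (nat \<Rightarrow> 'b::comm_ring_1) \<Rightarrow> nat set \<Rightarrow> 'b" where
  "LF I a f S = f a + (\<Sum>i\<in>I. if i \<in> S then - f i else f i)"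

definition PP :: "nat set \<Rightarrow> nat \<Rightarrow> (nat \<Rightarrow> 'b::comm_ring_1) \<Rightarrow> 'b" where
  "PP I a f = (\<Prod>S\<in>Pow I. LF I a f S)"

lemma subst_LF: "subst s (LF I a Var S) = LF I a s S"
  by (simp add: LF_def subst_add subst_sum subst_uminus if_distrib cong: if_cong)

lemma subst_PP: "subst s (PP I a Var) = PP I a s"
  by (simp add: PP_def subst_prod subst_LF)

lemma Delta_sqrt_PP: "Delta_sqrt = PP {1..4} 0 Var"
  by (simp add: Delta_sqrt_def PP_def LF_def)

lemma LF_flip:
  assumes "j \<in> I" "j \<noteq> a" "finite I"
  shows "LF I a (f(j := - f j)) S = LF I a f (S \<union> {j} - (S \<inter> {j}))"
proof -
  have "(\<Sum>i\<in>I. if i \<in> S then - (f(j := - f j)) i else (f(j := - f j)) i) =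
        (\<Sum>i\<in>I. if i \<in> (S \<union> {j} - (S \<inter> {j})) then - f i else f i)"
    by (rule sum.cong) auto
  thus ?thesis using assms by (simp add: LF_def)
qed

lemma PP_flip:
  assumes "j \<in> I" "j \<noteq> a" "finite I"
  shows "PP I a (f(j := - f j)) = PP I a f"
proof -
  have "PP I a (f(j := - f j)) = (\<Prod>S\<in>Pow I. LF I a f (S \<union> {j} - (S \<inter> {j})))"
    unfolding PP_def by (rule prod.cong) (simp_all add: LF_flip[OF assms])
  also have "\<dots> = PP I a f"
    unfolding PP_def
    by (rule prod.reindex_bij_witness[where i="\<lambda>S. S \<union> {j} - (S \<inter> {j})" and j="\<lambda>S. S \<union> {j} - (S \<inter> {j})"])
       (use assms in auto)
  finally show ?thesis .
qed

lemma card_Pow_even: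
  assumes "finite I" "I \<noteq> {}" shows "even (card (Pow I))"
  using assms by (simp add: card_Pow card_gt_0_iff)

lemma prod_uminus': "(\<Prod>x\<in>A. - (g x :: 'b::comm_ring_1)) = (-1) ^ card A * (\<Prod>x\<in>A. g x)"
  by (induction A rule: infinite_finite_induct) auto

lemma LF_flip_a:
  assumes "a \<notin> I" "finite I" "S \<subseteq> I"
  shows "LF I a (f(a := - f a)) S = - LF I a f (I - S)"
proof -
  have "(\<Sum>i\<in>I. if i \<in> S then - (f(a := - f a)) i else (f(a := - f a)) i) =
        - (\<Sum>i\<in>I. if i \<in> I - S then - f i else f i)"
    by (subst sum_negf[symmetric], rule sum.cong) (use assms in auto)
  thus ?thesis using assms by (simp add: LF_def)
qed

lemma PP_flip_a:
  assumes "a \<notin> I" "finite I" "I \<noteq> {}"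
  shows "PP I a (f(a := - f a)) = PP I a f"
proof -
  have "PP I a (f(a := - f a)) = (\<Prod>S\<in>Pow I. - LF I a f (I - S))"
    unfolding PP_def by (rule prod.cong) (use LF_flip_a[OF assms(1,2)] in auto)
  also have "\<dots> = (\<Prod>S\<in>Pow I. LF I a f (I - S))"
    using card_Pow_even[OF assms(2,3)] by (simp add: prod_uminus')
  also have "\<dots> = PP I a f"
    unfolding PP_def
    by (rule prod.reindex_bij_witness[where i="\<lambda>S. I - S" and j="\<lambda>S. I - S"]) auto
  finally show ?thesis .
qed

lemma LF_swap:
  assumes "b \<in> I" "c \<in> I" "a \<notin> I" "finite I"
  shows "LF I a (f \<circ> Transposition.transpose b c) S = LF I a f (Transposition.transpose b c ` S)"
proof -
  let ?t = "Transposition.transpose b c"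
  have ta: "?t a = a" using assms by (auto simp: Transposition.transpose_def)
  have "(\<Sum>i\<in>I. if i \<in> S then - f (?t i) else f (?t i)) =
        (\<Sum>i\<in>I. if ?t i \<in> ?t ` S then - f (?t i) else f (?t i))"
    by (simp add: inj_image_mem_iff)
  also have "\<dots> = (\<Sum>k\<in>I. if k \<in> ?t ` S then - f k else f k)"
    by (rule sum.reindex_bij_witness[where i="?t" and j="?t"]) (use assms in \<open>auto simp: Transposition.transpose_def\<close>)
  finally show ?thesis by (simp add: LF_def ta o_def)
qed

lemma PP_swap:
  assumes "b \<in> I" "c \<in> I" "a \<notin> I" "finite I"
  shows "PP I a (f \<circ> Transposition.transpose b c) = PP I a f"
proof -
  let ?t = "Transposition.transpose b c"
  have "PP I a (f \<circ> ?t) = (\<Prod>S\<in>Pow I. LF I a f (?t ` S))"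
    unfolding PP_def by (rule prod.cong) (simp_all add: LF_swap[OF assms])
  also have "\<dots> = PP I a f"
    unfolding PP_def
    by (rule prod.reindex_bij_witness[where i="\<lambda>S. ?t ` S" and j="\<lambda>S. ?t ` S"])
       (use assms in \<open>auto simp: image_image Transposition.transpose_def\<close>)
  finally show ?thesis .
qed



lemma card_A1:
  assumes "finite I" "b \<in> I"
  shows "card {S\<in>Pow I. b \<in> S} = card (Pow (I - {b}))"
proof -
  have "{S\<in>Pow I. b \<in> S} = insert b ` Pow (I - {b})"
  proof (intro equalityI subsetI)
    fix S assume S: "S \<in> {S\<in>Pow I. b \<in> S}"
    hence "S = insert b (S - {b})" by auto
    moreover have "S - {b} \<in> Pow (I - {b})" using S by auto
    ultimately show "S \<in> insert b ` Pow (I - {b})" by blast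
  qed (use assms in auto)
  moreover have "inj_on (insert b) (Pow (I - {b}))" by (auto simp: inj_on_def)
  ultimately show ?thesis by (simp add: card_image)
qed

lemma LF_swap_a_notin:
  assumes "b \<in> I" "a \<notin> I" "finite I" "b \<notin> S"
  shows "LF I a (f \<circ> Transposition.transpose a b) S = LF I a f S"
proof -
  let ?g = "f \<circ> Transposition.transpose a b"
  have ab: "a \<noteq> b" using assms by auto
  have R: "(\<Sum>i\<in>I - {b}. if i \<in> S then - ?g i else ?g i) = (\<Sum>i\<in>I - {b}. if i \<in> S then - f i else f i)"
    by (rule sum.cong) (use assms in \<open>auto simp: Transposition.transpose_def\<close>)
  have "LF I a ?g S = f b + (f a + (\<Sum>i\<in>I - {b}. if i \<in> S then - ?g i else ?g i))"
    unfolding LF_def using assms ab by (simp add: sum.remove[of I b])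
  also have "\<dots> = LF I a f S"
    unfolding LF_def R using assms by (simp add: sum.remove[of I b])
  finally show ?thesis .
qed

lemma LF_swap_a_in:
  assumes "b \<in> I" "a \<notin> I" "finite I" "b \<in> S"
  shows "LF I a (f \<circ> Transposition.transpose a b) S = - LF I a f (insert b (I - S))"
proof -
  let ?g = "f \<circ> Transposition.transpose a b"
  have ab: "a \<noteq> b" using assms by auto
  define R where "R = (\<Sum>i\<in>I - {b}. if i \<in> S then - f i else f i)"
  have R1: "(\<Sum>i\<in>I - {b}. if i \<in> S then - ?g i else ?g i) = R"
    unfolding R_def by (rule sum.cong) (use assms in \<open>auto simp: Transposition.transpose_def\<close>)
  have R2: "(\<Sum>i\<in>I - {b}. if i \<in> insert b (I - S) then - f i else f i) = - R"
    unfolding R_def by (subst sum_negf[symmetric], rule sum.cong) auto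
  have "LF I a ?g S = f b + (- f a + R)"
    unfolding LF_def using assms ab R1 by (simp add: sum.remove[of I b])
  also have "\<dots> = - LF I a f (insert b (I - S))"
    unfolding LF_def using assms R2 by (simp add: sum.remove[of I b])
  finally show ?thesis .
qed

lemma PP_swap_a:
  assumes "b \<in> I" "a \<notin> I" "finite I" "I - {b} \<noteq> {}"
  shows "PP I a (f \<circ> Transposition.transpose a b) = PP I a f"
proof -
  let ?g = "f \<circ> Transposition.transpose a b"
  define A0 where "A0 = {S\<in>Pow I. b \<notin> S}"
  define A1 where "A1 = {S\<in>Pow I. b \<in> S}"
  have split: "Pow I = A0 \<union> A1" "A0 \<inter> A1 = {}" "finite A0" "finite A1"
    using assms by (auto simp: A0_def A1_def)
  have ev: "even (card A1)"
    unfolding A1_def using card_A1[OF assms(3,1)] card_Pow_even[of "I - {b}"] assms by simp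
  have P0: "(\<Prod>S\<in>A0. LF I a ?g S) = (\<Prod>S\<in>A0. LF I a f S)"
    by (rule prod.cong) (simp_all add: A0_def LF_swap_a_notin[OF assms(1-3)])
  have "(\<Prod>S\<in>A1. LF I a ?g S) = (\<Prod>S\<in>A1. - LF I a f (insert b (I - S)))"
    by (rule prod.cong) (simp_all add: A1_def LF_swap_a_in[OF assms(1-3)])
  also have "\<dots> = (\<Prod>S\<in>A1. LF I a f (insert b (I - S)))"
    using ev by (simp add: prod_uminus')
  also have "\<dots> = (\<Prod>S\<in>A1. LF I a f S)"
    by (rule prod.reindex_bij_witness[where i="\<lambda>S. insert b (I - S)" and j="\<lambda>S. insert b (I - S)"])
       (use assms in \<open>auto simp: A1_def\<close>)
  finally have P1: "(\<Prod>S\<in>A1. LF I a ?g S) = (\<Prod>S\<in>A1. LF I a f S)" .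
  show ?thesis
    unfolding PP_def split(1) using split P0 P1 by (simp add: prod.union_disjoint)
qed

lemma PP_perm:
  assumes "finite I" "a \<notin> I" "\<And>b. b \<in> I \<Longrightarrow> I - {b} \<noteq> {}" "\<pi> permutes insert a I"
  shows "PP I a ((f::nat \<Rightarrow> 'b::comm_ring_1) \<circ> \<pi>) = PP I a f"
proof -
  have "finite (insert a I)" using assms(1) by simp
  from assms(4) this have "\<forall>f::nat \<Rightarrow> 'b::comm_ring_1. PP I a (f \<circ> \<pi>) = PP I a f"
  proof (induction rule: permutes_induct)
    case id thus ?case by simp
  next
    case (swap x y p)
    let ?t = "Transposition.transpose x y"
    have sw: "PP I a (f \<circ> ?t) = PP I a f" for f
    proof -
      consider "x = a" "y \<in> I" | "y = a" "x \<in> I" | "x \<in> I" "y \<in> I"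
        using swap by auto
      thus ?thesis
      proof cases
        case 1 thus ?thesis using PP_swap_a[of y I a f] assms by simp
      next
        case 2 thus ?thesis using PP_swap_a[of x I a f] assms by (simp add: transpose_commute)
      next
        case 3 thus ?thesis using PP_swap[of x I y a f] assms by simp
      qed
    qed
    show ?case
    proof
      fix f :: "nat \<Rightarrow> 'b"
      have "PP I a (f \<circ> (?t \<circ> p)) = PP I a ((f \<circ> ?t) \<circ> p)" by (simp add: o_assoc)
      also have "\<dots> = PP I a (f \<circ> ?t)" using swap.IH by metis
      also have "\<dots> = PP I a f" by (rule sw)
      finally show "PP I a (f \<circ> (?t \<circ> p)) = PP I a f" .
    qed
  qed
  thus ?thesis by blast
qed

lemma PP_zero:
  assumes "f a = 0" "b \<in> I" "a \<notin> I" "finite I" "I - {b} \<noteq> {}"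
  shows "PP I a f = (PP (I - {b}) b f) ^ 2"
proof -
  define J where "J = I - {b}"
  have fJ: "finite J" "b \<notin> J" "J \<noteq> {}" using assms by (auto simp: J_def)
  have split1: "Pow I = Pow J \<union> insert b ` Pow J"
  proof (intro equalityI subsetI)
    fix S assume "S \<in> Pow I"
    show "S \<in> Pow J \<union> insert b ` Pow J"
    proof (cases "b \<in> S")
      case True
      hence "S = insert b (S - {b})" by auto
      moreover have "S - {b} \<in> Pow J" using \<open>S \<in> Pow I\<close> by (auto simp: J_def)
      ultimately show ?thesis by blast
    next
      case False thus ?thesis using \<open>S \<in> Pow I\<close> by (auto simp: J_def)
    qed
  qed (use assms in \<open>auto simp: J_def\<close>)
  have split2: "Pow J \<inter> insert b ` Pow J = {}" using fJ by auto
  note split = split1 split2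
  have inj: "inj_on (insert b) (Pow J)" using fJ by (auto simp: inj_on_def)
  have L0: "LF I a f S = LF J b f S" if "S \<in> Pow J" for S
    using assms that fJ unfolding LF_def J_def by (simp add: sum.remove[of I b]) blast
  have L1: "LF I a f (insert b S) = - LF J b f (J - S)" if "S \<in> Pow J" for S
  proof -
    have R: "(\<Sum>i\<in>J. if i \<in> J - S then - f i else f i) = - (\<Sum>i\<in>J. if i \<in> insert b S then - f i else f i)"
      by (subst sum_negf[symmetric], rule sum.cong) (use fJ in auto)
    show ?thesis
      using assms that fJ R unfolding LF_def J_def by (simp add: sum.remove[of I b])
  qed
  have "(\<Prod>S\<in>insert b ` Pow J. LF I a f S) = (\<Prod>S\<in>Pow J. LF I a f (insert b S))"
    by (simp add: prod.reindex[OF inj])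
  also have "\<dots> = (\<Prod>S\<in>Pow J. - LF J b f (J - S))"
    by (rule prod.cong) (simp_all add: L1)
  also have "\<dots> = (\<Prod>S\<in>Pow J. LF J b f (J - S))"
    using card_Pow_even[OF fJ(1,3)] by (simp add: prod_uminus')
  also have "\<dots> = PP J b f"
    unfolding PP_def
    by (rule prod.reindex_bij_witness[where i="\<lambda>S. J - S" and j="\<lambda>S. J - S"]) auto
  finally have P1: "(\<Prod>S\<in>insert b ` Pow J. LF I a f S) = PP J b f" .
  have P0: "(\<Prod>S\<in>Pow J. LF I a f S) = PP J b f"
    unfolding PP_def by (rule prod.cong) (simp_all add: L0)
  have "PP I a f = (\<Prod>S\<in>Pow J. LF I a f S) * (\<Prod>S\<in>insert b ` Pow J. LF I a f S)"
    unfolding PP_def split(1) using split(2) fJ by (simp add: prod.union_disjoint)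
  thus ?thesis using P0 P1 by (simp add: power2_eq_square J_def)
qed



lemma vars_iff: "vars p \<subseteq> V \<longleftrightarrow> (\<forall>m\<in>Poly_Mapping.keys p. Poly_Mapping.keys m \<subseteq> V)"
  by (auto simp: vars_def)

lemma vars_add: "vars p \<subseteq> V \<Longrightarrow> vars q \<subseteq> V \<Longrightarrow> vars (p + q) \<subseteq> V"
  using keys_add[of p q] by (auto simp: vars_iff)

lemma vars_uminus: "vars p \<subseteq> V \<Longrightarrow> vars (- p) \<subseteq> V"
  by (simp add: vars_def keys_minus)

lemma vars_mult:
  assumes "vars p \<subseteq> V" "vars q \<subseteq> V" shows "vars (p * q) \<subseteq> V"
  unfolding vars_iff
proof
  fix m assume "m \<in> Poly_Mapping.keys (p * q)"
  then obtain a b where "m = a + b" "a \<in> Poly_Mapping.keys p" "b \<in> Poly_Mapping.keys q"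
    using keys_mult by blast
  thus "Poly_Mapping.keys m \<subseteq> V" using assms keys_add[of a b] unfolding vars_iff by blast
qed

lemma vars_one: "vars (1 :: 'a::comm_ring_1 mpoly) \<subseteq> V"
  by (simp add: vars_def)

lemma vars_zero: "vars 0 \<subseteq> V"
  by (simp add: vars_def)

lemma vars_sum: "(\<And>x. x \<in> A \<Longrightarrow> vars (f x) \<subseteq> V) \<Longrightarrow> vars (\<Sum>x\<in>A. f x) \<subseteq> V"
proof (induction A rule: infinite_finite_induct)
  case (insert x F) thus ?case by (simp add: vars_add)
qed (simp_all add: vars_zero)

lemma vars_prod: "(\<And>x. x \<in> A \<Longrightarrow> vars (f x) \<subseteq> V) \<Longrightarrow> vars (\<Prod>x\<in>A. f x :: 'a::comm_ring_1 mpoly) \<subseteq> V"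
proof (induction A rule: infinite_finite_induct)
  case (insert x F) thus ?case by (simp add: vars_mult)
qed (simp_all add: vars_one)

lemma vars_Var: "i \<in> V \<Longrightarrow> vars (Var i :: 'a::comm_ring_1 mpoly) \<subseteq> V"
  by (simp add: vars_def Var_def)

lemma vars_PP: "vars (PP I a (Var :: nat \<Rightarrow> 'a::comm_ring_1 mpoly)) \<subseteq> insert a I"
  unfolding PP_def LF_def
  by (intro vars_prod vars_add vars_sum vars_Var) (auto intro!: vars_uminus vars_Var)

lemma homogeneous_add: "homogeneous d p \<Longrightarrow> homogeneous d q \<Longrightarrow> homogeneous d (p + q)"
  using keys_add[of p q] by (auto simp: homogeneous_def)

lemma homogeneous_uminus: "homogeneous d p \<Longrightarrow> homogeneous d (- p)"
  by (simp add: homogeneous_def keys_minus)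

lemma homogeneous_mult:
  assumes "homogeneous d p" "homogeneous e q" shows "homogeneous (d + e) (p * q)"
  unfolding homogeneous_def
proof
  fix m assume "m \<in> Poly_Mapping.keys (p * q)"
  then obtain a b where "m = a + b" "a \<in> Poly_Mapping.keys p" "b \<in> Poly_Mapping.keys q"
    using keys_mult by blast
  thus "total_deg m = d + e" using assms by (auto simp: homogeneous_def total_deg_add)
qed

lemma homogeneous_sum: "(\<And>x. x \<in> A \<Longrightarrow> homogeneous d (f x)) \<Longrightarrow> homogeneous d (\<Sum>x\<in>A. f x)"
proof (induction A rule: infinite_finite_induct)
  case (insert x F) thus ?case by (simp add: homogeneous_add)
qed (simp_all add: homogeneous_def)

lemma homogeneous_one: "homogeneous 0 (1 :: 'a::comm_ring_1 mpoly)"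
  by (simp add: homogeneous_def total_deg_def)

lemma homogeneous_prod:
  "(\<And>x. x \<in> A \<Longrightarrow> homogeneous d (f x)) \<Longrightarrow> homogeneous (d * card A) (\<Prod>x\<in>A. f x :: 'a::comm_ring_1 mpoly)"
proof (induction A rule: infinite_finite_induct)
  case (insert x F)
  have "homogeneous (d + d * card F) (f x * (\<Prod>x\<in>F. f x))"
    using insert by (intro homogeneous_mult) auto
  thus ?case using insert by (simp add: add.commute)
qed (auto intro: homogeneous_one)

lemma homogeneous_Var: "homogeneous 1 (Var i :: 'a::comm_ring_1 mpoly)"
  by (simp add: homogeneous_def Var_def total_deg_def)

lemma homogeneous_PP: "homogeneous (card (Pow I)) (PP I a (Var :: nat \<Rightarrow> 'a::comm_ring_1 mpoly))"
proof -
  have "homogeneous (1 * card (Pow I)) (PP I a (Var :: nat \<Rightarrow> 'a::comm_ring_1 mpoly))"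
    unfolding PP_def LF_def
    by (intro homogeneous_prod homogeneous_add homogeneous_sum homogeneous_Var)
       (auto intro!: homogeneous_uminus homogeneous_Var[unfolded One_nat_def])
  thus ?thesis by simp
qed

lemma flip_upd: "flip j = Var(j := - Var j)"
  by (auto simp: flip_def fun_eq_iff)

lemma lookup_Var_single: "Poly_Mapping.lookup (Var i :: 'a::comm_ring_1 mpoly) (Poly_Mapping.single j 1) = (if i = j then 1 else 0)"
proof (cases "i = j")
  case False
  hence "Poly_Mapping.single i (1::nat) \<noteq> Poly_Mapping.single j 1"
    by (metis lookup_single_eq lookup_single_not_eq one_neq_zero)
  thus ?thesis using False by (simp add: Var_def lookup_single_not_eq)
qed (simp add: Var_def)

lemma lookup_LF_a:
  assumes "a \<notin> I"
  shows "Poly_Mapping.lookup (LF I a (Var :: nat \<Rightarrow> 'a::comm_ring_1 mpoly) S) (Poly_Mapping.single a 1) = 1"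
proof -
  have "(\<Sum>i\<in>I. Poly_Mapping.lookup (if i \<in> S then - Var i else Var i :: 'a mpoly) (Poly_Mapping.single a 1)) = 0"
  proof (rule sum.neutral, rule ballI)
    fix i assume "i \<in> I"
    hence "i \<noteq> a" using assms by auto
    hence "Poly_Mapping.lookup (Var i :: 'a mpoly) (Poly_Mapping.single a 1) = 0"
      by (simp only: lookup_Var_single if_False)
    thus "Poly_Mapping.lookup (if i \<in> S then - Var i else Var i :: 'a mpoly) (Poly_Mapping.single a 1) = 0"
      by simp
  qed
  moreover have "Poly_Mapping.lookup (Var a :: 'a mpoly) (Poly_Mapping.single a 1) = 1"
    by (simp only: lookup_Var_single) simp
  ultimately show ?thesis by (simp only: LF_def lookup_add lookup_sum) simp
qed

lemma LF_nonzero: "a \<notin> I \<Longrightarrow> LF I a (Var :: nat \<Rightarrow> 'a::comm_ring_1 mpoly) S \<noteq> 0"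
  by (metis lookup_LF_a lookup_zero zero_neq_one)

lemma PP_nonzero: "a \<notin> I \<Longrightarrow> PP I a (Var :: nat \<Rightarrow> 'a::idom mpoly) \<noteq> 0"
  by (cases "finite I") (auto simp: PP_def prod_zero_iff LF_nonzero)



lemma PP_cong: "(\<And>i. i \<in> insert a I \<Longrightarrow> f i = g i) \<Longrightarrow> PP I a f = PP I a g"
  unfolding PP_def LF_def by (intro prod.cong sum.cong arg_cong2[where f="(+)"]) auto

lemma subst_flip_PP:
  fixes I :: "nat set"
  assumes "finite I" "a \<notin> I" "I \<noteq> {}" "j \<in> insert a I"
  shows "subst (flip j) (PP I a (Var :: nat \<Rightarrow> 'a::comm_ring_1 mpoly)) = PP I a Var"
proof -
  have "subst (flip j) (PP I a (Var :: nat \<Rightarrow> 'a mpoly)) = PP I a (Var(j := - Var j))"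
    by (simp add: subst_PP flip_upd)
  also have "\<dots> = PP I a Var"
  proof (cases "j = a")
    case True thus ?thesis using PP_flip_a[OF assms(2,1,3), of Var] by simp
  next
    case False thus ?thesis using PP_flip[of j I a Var] assms by auto
  qed
  finally show ?thesis .
qed

lemma PP_root_ex:
  fixes I :: "nat set"
  assumes "finite I" "a \<notin> I" "I \<noteq> {}"
  shows "\<exists>q::'a::field_char_0 mpoly. subst sq q = PP I a Var"
  by (rule even_root_ex[OF vars_PP subst_flip_PP[OF assms]])

lemma subst_sq_perm: "subst sq (subst (\<lambda>i. Var (\<pi> i)) p) = subst (\<lambda>i. Var (\<pi> i)) (subst sq p)"
  by (simp add: subst_subst sq_def subst_power)

lemma PP_root_sym:
  fixes I :: "nat set"
  assumes "finite I" "a \<notin> I" "\<And>b. b \<in> I \<Longrightarrow> I - {b} \<noteq> {}" "subst sq q = PP I a Var"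
  shows "symmetric_in (insert a I) q"
  unfolding symmetric_in_def
proof (intro allI impI)
  fix \<pi> assume p: "\<pi> permutes insert a I"
  have "subst sq (subst (\<lambda>i. Var (\<pi> i)) q) = PP I a (\<lambda>i. Var (\<pi> i))"
    by (simp add: subst_sq_perm assms(4) subst_PP)
  also have "\<dots> = PP I a (Var \<circ> \<pi>)" by (simp add: o_def)
  also have "\<dots> = PP I a Var" by (rule PP_perm[OF assms(1-3) p])
  finally show "subst (\<lambda>i. Var (\<pi> i)) q = q" using assms(4) by (metis subst_sq_inj)
qed

lemma card_Pow4: "card (Pow {1..4::nat}) = 16" by (simp add: card_Pow)
lemma card_Pow3: "card (Pow {2..4::nat}) = 8" by (simp add: card_Pow)

theorem main_parts:
  assumes "subst sq (\<Delta>::rat mpoly) = Delta_sqrt"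
  shows "vars \<Delta> \<subseteq> {0..4} \<and> symmetric_in {0..4} \<Delta> \<and> homogeneous 8 \<Delta> \<and> \<Delta> \<noteq> 0 \<and>
      (\<exists>D :: rat mpoly. vars D \<subseteq> {1..4} \<and> symmetric_in {1..4} D \<and>
          homogeneous 4 D \<and>
          subst (\<lambda>i. if i = 0 then 0 else Var i) \<Delta> = D ^ 2)"
proof -
  have I4: "insert 0 {1..4} = {0..4::nat}" by auto
  have I3: "insert 1 {2..4} = {1..4::nat}" by auto
  have ne4: "{1..4::nat} - {b} \<noteq> {}" for b
  proof -
    have "(if b = 1 then 2 else 1) \<in> {1..4::nat} - {b}" by auto
    thus ?thesis by blast
  qed
  have ne3: "{2..4::nat} - {b} \<noteq> {}" for b
  proof -
    have "(if b = 2 then 3 else 2) \<in> {2..4::nat} - {b}" by auto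
    thus ?thesis by blast
  qed
  have DP: "Delta_sqrt = PP {1..4} 0 Var" by (rule Delta_sqrt_PP)
  have v: "vars \<Delta> \<subseteq> {0..4}"
  proof -
    have "vars \<Delta> = vars (PP {1..4} 0 (Var::nat\<Rightarrow>rat mpoly))"
      using assms DP vars_subst_sq[of \<Delta>] by metis
    thus ?thesis using vars_PP[of "{1..4::nat}" 0] I4 by simp
  qed
  have s: "symmetric_in {0..4} \<Delta>"
    using PP_root_sym[of "{1..4}" 0 \<Delta>, OF _ _ ne4] assms DP I4 by auto
  have h: "homogeneous 8 \<Delta>"
  proof -
    have "homogeneous (2*8) (PP {1..4::nat} 0 (Var :: nat \<Rightarrow> rat mpoly))"
      using homogeneous_PP[of "{1..4::nat}" 0] card_Pow4 by simp
    thus ?thesis using homogeneous_subst_sq[of 8 \<Delta>] assms DP by simp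
  qed
  have nz: "\<Delta> \<noteq> 0"
    using assms DP PP_nonzero[of 0 "{1..4::nat}"] by auto
  obtain D :: "rat mpoly" where D: "subst sq D = PP {2..4} 1 Var"
    using PP_root_ex[of "{2..4::nat}" 1] by auto
  have vD: "vars D \<subseteq> {1..4}"
  proof -
    have "vars D = vars (PP {2..4} 1 (Var::nat\<Rightarrow>rat mpoly))"
      using D vars_subst_sq[of D] by metis
    thus ?thesis using vars_PP[of "{2..4::nat}" 1] I3 by simp
  qed
  have sD: "symmetric_in {1..4} D"
    using PP_root_sym[of "{2..4}" 1 D, OF _ _ ne3] D I3 by auto
  have hD: "homogeneous 4 D"
  proof -
    have "homogeneous (2*4) (PP {2..4::nat} 1 (Var :: nat \<Rightarrow> rat mpoly))"
      using homogeneous_PP[of "{2..4::nat}" 1] card_Pow3 by simp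
    thus ?thesis using homogeneous_subst_sq[of 4 D] D by simp
  qed
  define z where "z = (\<lambda>i::nat. if i = 0 then 0 else Var i :: rat mpoly)"
  have "subst sq (subst z \<Delta>) = subst z (subst sq \<Delta>)"
  proof -
    have "(\<lambda>i. subst sq (z i)) = (\<lambda>i. subst z (sq i))"
      by (auto simp: z_def sq_def subst_power fun_eq_iff)
    thus ?thesis by (simp add: subst_subst)
  qed
  also have "\<dots> = PP {1..4} 0 z" by (simp add: assms DP subst_PP)
  also have "\<dots> = (PP {2..4} 1 z) ^ 2"
  proof -
    have "{1..4::nat} - {1} = {2..4}" by auto
    thus ?thesis using PP_zero[of z 0 1 "{1..4::nat}"] by (simp add: z_def)
  qed
  also have "PP {2..4} 1 z = PP {2..4} 1 Var"
    by (rule PP_cong) (auto simp: z_def)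
  also have "(PP {2..4} 1 Var) ^ 2 = subst sq (D ^ 2)"
    by (simp add: D subst_power)
  finally have "subst z \<Delta> = D ^ 2" by (rule subst_sq_inj)
  thus ?thesis using v s h nz vD sD hD by (auto simp: z_def)
qed



section \<open>Coefficient map rat to a field of char 0\<close>

abbreviation hm :: "rat mpoly \<Rightarrow> 'a::field_char_0 mpoly" where
  "hm \<equiv> Poly_Mapping.map of_rat"

lemma lookup_hm: "Poly_Mapping.lookup (hm p) m = of_rat (Poly_Mapping.lookup p m)"
  by (simp add: map.rep_eq when_def)

lemma keys_hm: "Poly_Mapping.keys (hm p :: 'a::field_char_0 mpoly) = Poly_Mapping.keys p"
  by (auto simp: in_keys_iff lookup_hm)

lemma hm_add: "hm (p + q) = (hm p + hm q :: 'a::field_char_0 mpoly)"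
  by (rule poly_mapping_eqI) (simp add: lookup_hm lookup_add of_rat_add)

lemma hm_zero: "hm 0 = (0 :: 'a::field_char_0 mpoly)"
  by (rule poly_mapping_eqI) (simp add: lookup_hm)

lemma hm_uminus: "hm (- p) = (- hm p :: 'a::field_char_0 mpoly)"
  by (rule poly_mapping_eqI) (simp add: lookup_hm of_rat_minus)

lemma hm_sum: "hm (\<Sum>x\<in>A. f x) = (\<Sum>x\<in>A. hm (f x) :: 'a::field_char_0 mpoly)"
  by (induction A rule: infinite_finite_induct) (auto simp: hm_add hm_zero)

lemma hm_single: "hm (Poly_Mapping.single m c) = (Poly_Mapping.single m (of_rat c) :: 'a::field_char_0 mpoly)"
  by simp

lemma hm_mult: "hm (p * q) = (hm p * hm q :: 'a::field_char_0 mpoly)"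
proof -
  have "hm (p * q) = (\<Sum>m\<in>Poly_Mapping.keys p. \<Sum>n\<in>Poly_Mapping.keys q.
     Poly_Mapping.single (m + n) (of_rat (Poly_Mapping.lookup p m) * of_rat (Poly_Mapping.lookup q n)) :: 'a mpoly)"
    by (subst mult_expand) (simp add: hm_sum of_rat_mult)
  also have "\<dots> = hm p * hm q"
    by (subst mult_expand) (simp add: keys_hm lookup_hm)
  finally show ?thesis .
qed

lemma hm_one: "hm 1 = (1 :: 'a::field_char_0 mpoly)"
  by (metis hm_single single_one of_rat_1)

lemma hm_prod: "hm (\<Prod>x\<in>A. f x) = (\<Prod>x\<in>A. hm (f x) :: 'a::field_char_0 mpoly)"
  by (induction A rule: infinite_finite_induct) (auto simp: hm_mult hm_one)

lemma hm_Var: "hm (Var i) = (Var i :: 'a::field_char_0 mpoly)"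
  by (simp add: Var_def)

lemma hm_PP: "hm (PP I a Var) = (PP I a Var :: 'a::field_char_0 mpoly)"
  by (simp add: PP_def LF_def hm_prod hm_add hm_sum hm_Var hm_uminus if_distrib cong: if_cong)

lemma hm_subst_sq: "subst sq (hm p) = (hm (subst sq p) :: 'a::field_char_0 mpoly)"
  by (rule poly_mapping_eqI) (simp add: lookup_subst_sq lookup_hm keys_hm of_rat_sum when_def, intro sum.cong refl, simp)

section \<open>Units\<close>

lemma max_key_add_less:
  fixes m n a b :: "nat \<Rightarrow>\<^sub>0 nat"
  assumes "m \<le> a" "n \<le> b" "(m, n) \<noteq> (a, b)"
  shows "m + n < a + b"
proof (cases "m = a")
  case True
  hence "n < b" using assms by auto
  thus ?thesis using True by (simp add: add_strict_left_mono)
next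
  case False
  hence "m < a" using assms by auto
  thus ?thesis using assms(2) by (rule add_less_le_mono)
qed

lemma min_key_add_less:
  fixes m n a b :: "nat \<Rightarrow>\<^sub>0 nat"
  assumes "a \<le> m" "b \<le> n" "(m, n) \<noteq> (a, b)"
  shows "a + b < m + n"
  using max_key_add_less[of a m b n] assms by auto

lemma lookup_mult_extreme:
  fixes f g :: "'a::comm_ring_1 mpoly"
  assumes "mf \<in> Poly_Mapping.keys f" "mg \<in> Poly_Mapping.keys g"
    and "\<And>m n. m \<in> Poly_Mapping.keys f \<Longrightarrow> n \<in> Poly_Mapping.keys g \<Longrightarrow> (m, n) \<noteq> (mf, mg) \<Longrightarrow> m + n \<noteq> mf + mg"
  shows "Poly_Mapping.lookup (f * g) (mf + mg) = Poly_Mapping.lookup f mf * Poly_Mapping.lookup g mg"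
proof -
  have "Poly_Mapping.lookup (f * g) (mf + mg) = (\<Sum>m\<in>Poly_Mapping.keys f. \<Sum>n\<in>Poly_Mapping.keys g.
      (if m = mf \<and> n = mg then Poly_Mapping.lookup f m * Poly_Mapping.lookup g n else 0))"
    by (subst mult_expand, simp add: lookup_sum lookup_single when_def, intro sum.cong refl)
       (use assms(3) in auto)
  also have "\<dots> = (\<Sum>m\<in>Poly_Mapping.keys f. if m = mf then Poly_Mapping.lookup f mf * Poly_Mapping.lookup g mg else 0)"
  proof (rule sum.cong[OF refl])
    fix m show "(\<Sum>n\<in>Poly_Mapping.keys g. if m = mf \<and> n = mg then Poly_Mapping.lookup f m * Poly_Mapping.lookup g n else 0) = (if m = mf then Poly_Mapping.lookup f mf * Poly_Mapping.lookup g mg else 0)"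
      using assms(2) by (cases "m = mf") (simp_all add: sum.delta)
  qed
  also have "\<dots> = Poly_Mapping.lookup f mf * Poly_Mapping.lookup g mg"
    using assms(1) by (simp add: sum.delta)
  finally show ?thesis .
qed

lemma add_eq_0_nat_pm: "(a + b :: nat \<Rightarrow>\<^sub>0 nat) = 0 \<Longrightarrow> a = 0"
  by (rule poly_mapping_eqI) (metis add_is_0 lookup_add lookup_zero)

lemma unit_keys:
  fixes u :: "'a::field mpoly"
  assumes "u dvd 1"
  shows "Poly_Mapping.keys u \<subseteq> {0}"
proof -
  obtain v where uv: "1 = u * v" using assms by (rule dvdE)
  have nz: "u \<noteq> 0" "v \<noteq> 0" using uv by (metis mult_zero_left zero_neq_one, metis mult_zero_right zero_neq_one)
  hence ne: "Poly_Mapping.keys u \<noteq> {}" "Poly_Mapping.keys v \<noteq> {}" by simp_all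
  define a where "a = Max (Poly_Mapping.keys u)"
  define b where "b = Max (Poly_Mapping.keys v)"
  define c where "c = Min (Poly_Mapping.keys u)"
  define d where "d = Min (Poly_Mapping.keys v)"
  have ab: "a \<in> Poly_Mapping.keys u" "b \<in> Poly_Mapping.keys v" "c \<in> Poly_Mapping.keys u" "d \<in> Poly_Mapping.keys v"
    using ne by (auto simp: a_def b_def c_def d_def)
  have "Poly_Mapping.lookup (u * v) (a + b) = Poly_Mapping.lookup u a * Poly_Mapping.lookup v b"
  proof (rule lookup_mult_extreme[OF ab(1,2)])
    fix m n assume mn: "m \<in> Poly_Mapping.keys u" "n \<in> Poly_Mapping.keys v" "(m, n) \<noteq> (a, b)"
    have "m \<le> a" "n \<le> b" using mn by (simp_all add: a_def b_def)
    hence "m + n < a + b" using mn(3) by (rule max_key_add_less)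
    thus "m + n \<noteq> a + b" by simp
  qed
  also have "\<dots> \<noteq> 0" using ab by (simp add: in_keys_iff)
  finally have ab0': "Poly_Mapping.lookup (u * v) (a + b) \<noteq> 0" .
  have ab0: "Poly_Mapping.lookup (1::'a mpoly) (a + b) \<noteq> 0" using ab0' by (simp only: uv[symmetric] not_False_eq_True)
  have "a + b = 0"
  proof (rule ccontr)
    assume "a + b \<noteq> 0"
    hence "Poly_Mapping.lookup (1::'a mpoly) (a + b) = 0" by (simp add: lookup_one)
    thus False using ab0 by contradiction
  qed
  hence a0: "a = 0" by (rule add_eq_0_nat_pm)
  have "Poly_Mapping.lookup (u * v) (c + d) = Poly_Mapping.lookup u c * Poly_Mapping.lookup v d"
  proof (rule lookup_mult_extreme[OF ab(3,4)])
    fix m n assume mn: "m \<in> Poly_Mapping.keys u" "n \<in> Poly_Mapping.keys v" "(m, n) \<noteq> (c, d)"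
    have "c \<le> m" "d \<le> n" using mn by (simp_all add: c_def d_def)
    hence "c + d < m + n" using mn(3) by (rule min_key_add_less)
    thus "m + n \<noteq> c + d" by simp
  qed
  also have "\<dots> \<noteq> 0" using ab by (simp add: in_keys_iff)
  finally have cd0': "Poly_Mapping.lookup (u * v) (c + d) \<noteq> 0" .
  have cd0: "Poly_Mapping.lookup (1::'a mpoly) (c + d) \<noteq> 0" using cd0' by (simp only: uv[symmetric] not_False_eq_True)
  have "c + d = 0"
  proof (rule ccontr)
    assume "c + d \<noteq> 0"
    hence "Poly_Mapping.lookup (1::'a mpoly) (c + d) = 0" by (simp add: lookup_one)
    thus False using cd0 by contradiction
  qed
  hence c0: "c = 0" by (rule add_eq_0_nat_pm)
  show ?thesis
  proof
    fix m assume m: "m \<in> Poly_Mapping.keys u"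
    have "m \<le> a" unfolding a_def using m by (rule Max_ge[OF finite_keys])
    moreover have "c \<le> m" unfolding c_def using m by (rule Min_le[OF finite_keys])
    ultimately have "m = 0" using a0 c0 by (metis order.antisym)
    thus "m \<in> {0}" by simp
  qed
qed

lemma keys_zero_unit:
  fixes a :: "'a::field mpoly"
  assumes "Poly_Mapping.keys a \<subseteq> {0}" "a \<noteq> 0"
  shows "a dvd 1"
proof -
  define c where "c = Poly_Mapping.lookup a 0"
  have ac: "a = Const c"
  proof (rule poly_mapping_eqI)
    fix k show "Poly_Mapping.lookup a k = Poly_Mapping.lookup (Const c) k"
    proof (cases "k = 0")
      case True thus ?thesis by (simp add: Const_def c_def)
    next
      case False
      hence "k \<notin> Poly_Mapping.keys a" using assms(1) by blast
      hence "Poly_Mapping.lookup a k = 0" by (simp add: in_keys_iff)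
      thus ?thesis using False by (simp add: Const_def lookup_single_not_eq)
    qed
  qed
  have "c \<noteq> 0" using ac assms(2) by (metis Const_zero)
  hence "a * Const (inverse c) = 1"
    by (simp add: ac flip: Const_mult)
  thus ?thesis by (metis dvdI)
qed



lemma dvd_prod_diff:
  fixes L :: "'a::comm_ring_1"
  shows "(\<And>x. x \<in> A \<Longrightarrow> L dvd f x - g x) \<Longrightarrow> L dvd (\<Prod>x\<in>A. f x) - (\<Prod>x\<in>A. g x)"
proof (induction A rule: infinite_finite_induct)
  case (insert x F)
  have e: "f x * prod f F - g x * prod g F = f x * (prod f F - prod g F) + (f x - g x) * prod g F"
    by (simp add: algebra_simps)
  show ?case using insert by (simp add: e dvd_add dvd_mult dvd_mult2)
qed simp_all

lemma dvd_power_diff: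
  fixes L :: "'a::comm_ring_1"
  shows "L dvd a - b \<Longrightarrow> L dvd a ^ n - b ^ n"
proof (induction n)
  case (Suc n)
  have e: "a ^ Suc n - b ^ Suc n = a * (a ^ n - b ^ n) + (a - b) * b ^ n"
    by (simp add: algebra_simps)
  show ?case using Suc by (simp only: e) (simp add: dvd_add dvd_mult dvd_mult2)
qed simp

lemma dvd_subst_diff:
  assumes "\<And>i. L dvd s i - t i"
  shows "L dvd subst s p - subst t p"
proof -
  have "subst s p - subst t p = (\<Sum>m\<in>Poly_Mapping.keys p. Const (Poly_Mapping.lookup p m) * (mon s m - mon t m))"
    by (simp add: subst_eq sum_subtractf right_diff_distrib)
  also have "L dvd \<dots>"
    unfolding mon_def
    by (intro dvd_sum dvd_mult dvd_prod_diff dvd_power_diff assms)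
  finally show ?thesis .
qed

definition rr :: "nat set \<Rightarrow> nat \<Rightarrow> nat set \<Rightarrow> nat \<Rightarrow> 'a::comm_ring_1 mpoly" where
  "rr I a S = (\<lambda>i. if i = a then Var a - LF I a Var S else Var i)"

lemma subst_rr_LF:
  assumes "a \<notin> I"
  shows "subst (rr I a S) (LF I a Var S') = LF I a Var S' - LF I a Var S"
proof -
  have "(\<Sum>i\<in>I. if i \<in> S' then - rr I a S i else rr I a S i) = (\<Sum>i\<in>I. if i \<in> S' then - Var i else Var i)"
    by (rule sum.cong) (use assms in \<open>auto simp: rr_def\<close>)
  note sum_eq = this
  have ra: "rr I a S a = Var a - LF I a Var S" by (simp add: rr_def)
  have "subst (rr I a S) (LF I a Var S') = LF I a (rr I a S) S'" by (rule subst_LF)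
  also have "\<dots> = (Var a - LF I a Var S) + (\<Sum>i\<in>I. if i \<in> S' then - Var i else Var i)"
    by (simp only: LF_def[of I a "rr I a S" S'] sum_eq ra)
  also have "\<dots> = LF I a Var S' - LF I a Var S"
    by (simp only: LF_def[of I a Var S']) (simp add: algebra_simps)
  finally show ?thesis .
qed

lemma LF_dvd_iff:
  fixes p :: "'a::comm_ring_1 mpoly"
  assumes "a \<notin> I"
  shows "LF I a Var S dvd p \<longleftrightarrow> subst (rr I a S) p = 0"
proof
  assume "LF I a Var S dvd p"
  then obtain q where "p = LF I a Var S * q" by (rule dvdE)
  thus "subst (rr I a S) p = 0" by (simp add: subst_mult subst_rr_LF[OF assms])
next
  assume z: "subst (rr I a S) p = 0"
  have "LF I a Var S dvd subst Var p - subst (rr I a S) p"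
  proof (rule dvd_subst_diff)
    fix i show "LF I a Var S dvd Var i - rr I a S i" by (simp add: rr_def)
  qed
  thus "LF I a Var S dvd p" using z by simp
qed

lemma LF_prime:
  fixes x y :: "'a::field_char_0 mpoly"
  assumes "a \<notin> I" "LF I a Var S dvd x * y"
  shows "LF I a Var S dvd x \<or> LF I a Var S dvd y"
  using assms by (simp add: LF_dvd_iff subst_mult)

lemma LF_not_unit:
  assumes "a \<notin> I"
  shows "\<not> (LF I a Var S :: 'a::field_char_0 mpoly) dvd 1"
proof
  assume "(LF I a Var S :: 'a mpoly) dvd 1"
  hence "Poly_Mapping.keys (LF I a Var S :: 'a mpoly) \<subseteq> {0}" by (rule unit_keys)
  moreover have "Poly_Mapping.single a 1 \<in> Poly_Mapping.keys (LF I a Var S :: 'a mpoly)"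
    unfolding in_keys_iff using lookup_LF_a[OF assms, of S] by (metis one_neq_zero)
  moreover have "Poly_Mapping.single a (1::nat) \<noteq> 0" by (metis lookup_single_eq lookup_zero one_neq_zero)
  ultimately show False by blast
qed

lemma lookup_sigma:
  assumes "k \<in> I" "finite I"
  shows "Poly_Mapping.lookup (\<Sum>i\<in>I. if i \<in> S then - Var i else Var i :: 'a::comm_ring_1 mpoly) (Poly_Mapping.single k 1)
       = (if k \<in> S then -1 else 1)"
proof -
  have "(\<Sum>i\<in>I. Poly_Mapping.lookup (if i \<in> S then - Var i else Var i :: 'a mpoly) (Poly_Mapping.single k 1))
      = (\<Sum>i\<in>I. if i = k then (if k \<in> S then -1 else 1) else 0)"
  proof (rule sum.cong[OF refl])
    fix i show "Poly_Mapping.lookup (if i \<in> S then - Var i else Var i :: 'a mpoly) (Poly_Mapping.single k 1)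
       = (if i = k then (if k \<in> S then -1 else 1) else 0)"
      by (cases "i = k"; cases "i \<in> S") (simp_all only: lookup_uminus lookup_Var_single if_True if_False; simp)+
  qed
  also have "\<dots> = (if k \<in> S then -1 else 1)" using assms by (simp add: sum.delta')
  finally show ?thesis by (simp add: lookup_sum)
qed

lemma LF_dvd_distinct:
  assumes "a \<notin> I" "finite I" "S \<subseteq> I" "S' \<subseteq> I" "(LF I a Var S :: 'a::field_char_0 mpoly) dvd LF I a Var S'"
  shows "S = S'"
proof (rule ccontr)
  assume "S \<noteq> S'"
  then obtain k where k: "k \<in> I" "(k \<in> S) \<noteq> (k \<in> S')" using assms(3,4) by blast
  have "subst (rr I a S) (LF I a Var S') = (0 :: 'a mpoly)"
    using assms(5) LF_dvd_iff[OF assms(1)] by blast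
  hence "LF I a Var S' - LF I a Var S = (0 :: 'a mpoly)" by (simp add: subst_rr_LF[OF assms(1)])
  hence "Poly_Mapping.lookup (LF I a Var S' - LF I a Var S :: 'a mpoly) (Poly_Mapping.single k 1) = 0" by simp
  moreover have "Poly_Mapping.lookup (LF I a Var S' - LF I a Var S :: 'a mpoly) (Poly_Mapping.single k 1)
     = (if k \<in> S' then -1 else 1) - (if k \<in> S then -1 else 1)"
    by (simp add: LF_def lookup_minus lookup_add lookup_sigma[OF k(1) assms(2), unfolded One_nat_def])
  ultimately show False using k(2) by (auto split: if_splits)
qed

lemma factor_prod:
  fixes p :: "'b \<Rightarrow> 'a::idom"
  assumes "finite U" "\<And>x. x \<in> U \<Longrightarrow> p x \<noteq> 0"
    "\<And>x c d. x \<in> U \<Longrightarrow> p x dvd c * d \<Longrightarrow> p x dvd c \<or> p x dvd d"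
    "(\<Prod>x\<in>U. p x) = A * B"
  shows "\<exists>T u. T \<subseteq> U \<and> u dvd 1 \<and> A = u * (\<Prod>x\<in>T. p x)"
  using assms
proof (induction U arbitrary: A B rule: finite_induct)
  case empty
  have "1 = A * B" using empty.prems(3) by simp
  hence "A dvd 1" by (rule dvdI)
  hence "{} \<subseteq> {} \<and> A dvd 1 \<and> A = A * (\<Prod>x\<in>{}. p x)" by simp
  thus ?case by (intro exI)
next
  case (insert x U)
  have PU: "p x * (\<Prod>x\<in>U. p x) = A * B"
    using insert.prems(3) insert.hyps by simp
  hence "A * B = p x * (\<Prod>x\<in>U. p x)" by simp
  hence px: "p x dvd A * B" by (rule dvdI)
  have nz: "p x \<noteq> 0" using insert.prems(1) by simp
  have h1: "\<And>y. y \<in> U \<Longrightarrow> p y \<noteq> 0" using insert.prems(1) by simp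
  have h2: "\<And>y c d. y \<in> U \<Longrightarrow> p y dvd c * d \<Longrightarrow> p y dvd c \<or> p y dvd d"
    using insert.prems(2) by simp
  from insert.prems(2)[OF _ px] have "p x dvd A \<or> p x dvd B" by simp
  thus ?case
  proof
    assume "p x dvd A"
    then obtain A' where A': "A = p x * A'" by (rule dvdE)
    have "p x * (\<Prod>x\<in>U. p x) = p x * (A' * B)"
      using PU by (simp only: A' mult.assoc)
    hence "(\<Prod>x\<in>U. p x) = A' * B" using nz by simp
    from insert.IH[OF h1 h2 this] obtain T u where T: "T \<subseteq> U" "u dvd 1" "A' = u * (\<Prod>x\<in>T. p x)"
      by blast
    have xT: "x \<notin> T" using T(1) insert.hyps by blast
    have fT: "finite T" using T(1) insert.hyps finite_subset by blast
    have "A = u * (\<Prod>x\<in>insert x T. p x)"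
      using xT fT by (simp add: A' T(3) mult.left_commute)
    moreover have "insert x T \<subseteq> insert x U" using T(1) by blast
    ultimately show ?case using T(2) by blast
  next
    assume "p x dvd B"
    then obtain B' where B': "B = p x * B'" by (rule dvdE)
    have "p x * (\<Prod>x\<in>U. p x) = p x * (A * B')"
      using PU by (simp only: B' mult.left_commute)
    hence "(\<Prod>x\<in>U. p x) = A * B'" using nz by simp
    from insert.IH[OF h1 h2 this] obtain T u where "T \<subseteq> U" "u dvd 1" "A = u * (\<Prod>x\<in>T. p x)"
      by blast
    moreover have "T \<subseteq> insert x U" using \<open>T \<subseteq> U\<close> by blast
    ultimately show ?case by blast
  qed
qed

lemma prime_dvd_prod:
  fixes q :: "'a::comm_ring_1"
  assumes "finite X" "\<not> q dvd 1" "\<And>c d. q dvd c * d \<Longrightarrow> q dvd c \<or> q dvd d"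
    "q dvd (\<Prod>x\<in>X. g x)"
  shows "\<exists>x\<in>X. q dvd g x"
  using assms(1,4)
proof (induction X rule: finite_induct)
  case empty thus ?case using assms(2) by simp
next
  case (insert x F)
  hence "q dvd g x * prod g F" by simp
  thus ?case using assms(3) insert by blast
qed



lemma subst_flip_sq: "subst (flip j) (subst sq x) = subst sq x"
proof -
  have "(\<lambda>i. subst (flip j) (sq i)) = (sq :: nat \<Rightarrow> 'a::comm_ring_1 mpoly)"
    by (rule ext) (simp add: sq_def subst_power flip_def)
  thus ?thesis by (simp add: subst_subst)
qed

lemma subst_unit: "u dvd 1 \<Longrightarrow> subst s u dvd 1"
proof -
  assume "u dvd 1"
  then obtain v where "1 = u * v" by (rule dvdE)
  hence "1 = subst s u * subst s v" by (metis subst_mult subst_one)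
  thus ?thesis by (rule dvdI)
qed

lemma unit_from_sq:
  fixes x :: "'a::field mpoly"
  assumes "subst sq x dvd 1" "x \<noteq> 0"
  shows "x dvd 1"
proof (rule keys_zero_unit[OF _ assms(2)])
  show "Poly_Mapping.keys x \<subseteq> {0}"
  proof
    fix m assume "m \<in> Poly_Mapping.keys x"
    hence "m + m \<in> Poly_Mapping.keys (subst sq x)" by (simp add: keys_subst_sq)
    hence "m + m = 0" using unit_keys[OF assms(1)] by blast
    thus "m \<in> {0}" using add_eq_0_nat_pm by blast
  qed
qed

definition fl :: "nat \<Rightarrow> nat set \<Rightarrow> nat set" where
  "fl j S = S \<union> {j} - S \<inter> {j}"

lemma fl_fl: "fl j (fl j S) = S"
  by (auto simp: fl_def)

lemma closure_all:
  assumes "S0 \<in> T" "\<And>S j. S \<in> T \<Longrightarrow> j \<in> I \<Longrightarrow> fl j S \<in> T" "finite I"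
  shows "\<And>F. F \<subseteq> I \<Longrightarrow> (S0 - F) \<union> (F - S0) \<in> T"
proof -
  fix F assume "F \<subseteq> I"
  hence "finite F" using assms(3) finite_subset by blast
  thus "(S0 - F) \<union> (F - S0) \<in> T" using \<open>F \<subseteq> I\<close>
  proof (induction F rule: finite_induct)
    case empty thus ?case using assms(1) by simp
  next
    case (insert x F)
    have e: "(S0 - insert x F) \<union> (insert x F - S0) = fl x ((S0 - F) \<union> (F - S0))"
      using insert.hyps(2) unfolding fl_def by blast
    have "(S0 - F) \<union> (F - S0) \<in> T" using insert.IH insert.prems by blast
    moreover have "x \<in> I" using insert.prems by blast
    ultimately show ?case unfolding e by (rule assms(2))
  qed
qed

lemma irred_generic:
  fixes \<Delta> :: "rat mpoly"
  assumes "subst sq \<Delta> = Delta_sqrt" "homogeneous 8 \<Delta>" "\<Delta> \<noteq> 0"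
  shows "irreducible (hm \<Delta> :: 'a::field_char_0 mpoly)"
proof (rule irreducibleI)
  define I where "I = {1..4::nat}"
  have fI: "finite I" and zI: "0 \<notin> I" by (simp_all add: I_def)
  define L where "L = (\<lambda>S. LF I 0 Var S :: 'a mpoly)"
  have sqD: "subst sq (hm \<Delta> :: 'a mpoly) = (\<Prod>S\<in>Pow I. L S)"
  proof -
    have "subst sq (hm \<Delta> :: 'a mpoly) = hm (subst sq \<Delta>)" by (rule hm_subst_sq)
    also have "\<dots> = hm (PP I 0 Var)" by (simp add: assms(1) Delta_sqrt_PP I_def)
    also have "\<dots> = (PP I 0 Var :: 'a mpoly)" by (rule hm_PP)
    also have "\<dots> = (\<Prod>S\<in>Pow I. L S)" by (simp add: PP_def L_def)
    finally show ?thesis .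
  qed
  show nz: "(hm \<Delta> :: 'a mpoly) \<noteq> 0"
    using assms(3) keys_hm[of \<Delta>, where 'a='a] by (metis keys_eq_empty)
  show "\<not> (hm \<Delta> :: 'a mpoly) dvd 1"
  proof
    assume "(hm \<Delta> :: 'a mpoly) dvd 1"
    hence k: "Poly_Mapping.keys \<Delta> \<subseteq> {0}" using unit_keys keys_hm[of \<Delta>, where 'a='a] by metis
    have "Poly_Mapping.keys \<Delta> \<noteq> {}" using assms(3) by simp
    hence "0 \<in> Poly_Mapping.keys \<Delta>" using k by blast
    hence "total_deg 0 = 8" using assms(2) by (simp add: homogeneous_def)
    thus False by (simp add: total_deg_def)
  qed
  fix x y :: "'a mpoly"
  assume xy: "hm \<Delta> = x * y"
  have xnz: "x \<noteq> 0" using nz xy by (metis mult_zero_left)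
  have ynz: "y \<noteq> 0" using nz xy by (metis mult_zero_right)
  define X where "X = subst sq x"
  define Y where "Y = subst sq y"
  have XY: "(\<Prod>S\<in>Pow I. L S) = X * Y" using sqD xy by (simp add: X_def Y_def subst_mult)
  have Xnz: "X \<noteq> 0"
  proof
    assume "X = 0"
    hence "subst sq x = subst sq 0" by (simp add: X_def)
    thus False using xnz subst_sq_inj by blast
  qed
  have Lnz: "\<And>S. L S \<noteq> 0" using LF_nonzero[OF zI] by (simp add: L_def)
  have Lpr: "\<And>S c d. L S dvd c * d \<Longrightarrow> L S dvd c \<or> L S dvd d"
    unfolding L_def by (rule LF_prime[OF zI])
  have Lnu: "\<And>S. \<not> L S dvd 1" unfolding L_def by (rule LF_not_unit[OF zI])
  have "\<exists>T u. T \<subseteq> Pow I \<and> u dvd 1 \<and> X = u * (\<Prod>S\<in>T. L S)"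
  proof (rule factor_prod[OF _ _ _ XY])
    show "finite (Pow I)" using fI by simp
  next
    fix S show "L S \<noteq> 0" by (rule Lnz)
  next
    fix S c d assume "L S dvd c * d" thus "L S dvd c \<or> L S dvd d" by (rule Lpr)
  qed
  then obtain T u where T: "T \<subseteq> Pow I" "u dvd 1" "X = u * (\<Prod>S\<in>T. L S)" by blast
  have fT: "finite T" using finite_subset[OF T(1)] fI by simp
  have clos: "fl j S \<in> T" if S: "S \<in> T" and j: "j \<in> I" for S j
  proof -
    have "L S dvd (\<Prod>S\<in>T. L S)" using fT S by (rule dvd_prodI)
    hence dX: "L S dvd X" using T(3) by simp
    have LF: "subst (flip j) (L S') = L (fl j S')" for S'
    proof -
      have "subst (flip j) (L S') = LF I 0 (Var(j := - Var j)) S'"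
        by (simp add: L_def subst_LF flip_upd)
      also have "\<dots> = L (fl j S')"
      proof -
        have "j \<noteq> 0" proof assume "j = 0" thus False using j zI by simp qed
        thus ?thesis unfolding L_def fl_def by (rule LF_flip[OF j _ fI])
      qed
      finally show ?thesis .
    qed
    have "X = subst (flip j) X" by (simp add: X_def subst_flip_sq)
    also have "\<dots> = subst (flip j) u * (\<Prod>S'\<in>T. L (fl j S'))"
      by (simp add: T(3) subst_mult subst_prod LF)
    finally have "L S dvd subst (flip j) u * (\<Prod>S'\<in>T. L (fl j S'))" using dX by simp
    hence "L S dvd subst (flip j) u \<or> L S dvd (\<Prod>S'\<in>T. L (fl j S'))" by (rule Lpr)
    moreover have "\<not> L S dvd subst (flip j) u"
      using Lnu subst_unit[OF T(2), of "flip j"] dvd_trans by blast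
    ultimately have "L S dvd (\<Prod>S'\<in>T. L (fl j S'))" by blast
    then obtain S' where S': "S' \<in> T" "L S dvd L (fl j S')"
      using prime_dvd_prod[OF fT Lnu Lpr] by blast
    have "S \<subseteq> I" using S T(1) by blast
    moreover have "fl j S' \<subseteq> I" using S'(1) T(1) j unfolding fl_def by blast
    ultimately have "S = fl j S'"
      using LF_dvd_distinct[OF zI fI] S'(2) unfolding L_def by blast
    thus ?thesis using S'(1) fl_fl by simp
  qed
  show "x dvd 1 \<or> y dvd 1"
  proof (cases "T = {}")
    case True
    hence "X dvd 1" using T by simp
    thus ?thesis using unit_from_sq xnz X_def by blast
  next
    case False
    then obtain S0 where S0: "S0 \<in> T" by blast
    have "Pow I \<subseteq> T"
    proof
      fix S assume S: "S \<in> Pow I"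
      have sub: "(S0 - S) \<union> (S - S0) \<subseteq> I" using S S0 T(1) by blast
      have "(S0 - ((S0 - S) \<union> (S - S0))) \<union> (((S0 - S) \<union> (S - S0)) - S0) \<in> T"
        by (rule closure_all[OF S0 clos fI sub])
      moreover have "(S0 - ((S0 - S) \<union> (S - S0))) \<union> (((S0 - S) \<union> (S - S0)) - S0) = S" by blast
      ultimately show "S \<in> T" by simp
    qed
    hence "T = Pow I" using T(1) by blast
    hence "X = u * (\<Prod>S\<in>Pow I. L S)" using T(3) by simp
    hence "X = u * (X * Y)" by (simp only: XY)
    hence "X * (u * Y) = X * 1" by (simp add: ac_simps)
    hence "u * Y = 1" using Xnz by simp
    hence "Y dvd 1" by (metis dvdI mult.commute)
    thus ?thesis using unit_from_sq ynz Y_def by blast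
  qed
qed


theorem mainTheorem7:
  "\<exists>\<Delta> :: rat mpoly.
      vars \<Delta> \<subseteq> {0..4} \<and>
      subst (\<lambda>i. Var i ^ 2) \<Delta> = Delta_sqrt \<and>
      symmetric_in {0..4} \<Delta> \<and>
      homogeneous 8 \<Delta> \<and> \<Delta> \<noteq> 0 \<and>
      irreducible (Poly_Mapping.map (of_rat :: rat \<Rightarrow> complex) \<Delta>) \<and>
      (\<exists>D :: rat mpoly. vars D \<subseteq> {1..4} \<and> symmetric_in {1..4} D \<and>
          homogeneous 4 D \<and>
          subst (\<lambda>i. if i = 0 then 0 else Var i) \<Delta> = D ^ 2)"
proof -
  have "\<exists>q::rat mpoly. subst sq q = PP {1..4} 0 Var"
    by (rule PP_root_ex) auto
  then obtain \<Delta> :: "rat mpoly" where D: "subst sq \<Delta> = Delta_sqrt"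
    using Delta_sqrt_PP by metis
  note P = main_parts[OF D]
  have sqe: "sq = (\<lambda>i. Var i ^ 2 :: rat mpoly)" by (rule ext) (simp add: sq_def)
  have irr: "irreducible (Poly_Mapping.map (of_rat :: rat \<Rightarrow> complex) \<Delta>)"
    using irred_generic[OF D] P by blast
  show ?thesis
    using P irr D unfolding sqe by blast
qed

end
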